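(* Under the setting and conditions of the context, suppose in addition that the base procedure satisfies $\mathbb{E}[\mathrm{Regret}_T^{\mathrm{base}}(a,b)]=\Omega(T)$. Then $\mathbb{E}[\mathrm{Regret}_T^{\mathrm{DOMT}}(a,b)]=\mathbb{E}[\mathrm{Regret}_T^{\mathrm{base}}(a,b)]+\mathcal{O}(\sqrt T)$, and $\mathbb{E}[\mathrm{Regret}_T^{\mathrm{DOMT}}(a,b)]=\Theta(T)$.
   Context: Data model: states $Y_t\in\{0,1\}$; conditionally on the states and the past, $p_t\sim\mathrm{Uniform}[0,1]$ if $Y_t=0$ and $p_t\sim G$ if $Y_t=1$, where $G$ is a continuous strictly increasing CDF on $[0,1]$, $G(0)=0,G(1)=1$, and $G$ is $L$-Lipschitz for some $L\ge1$. A base procedure computes $\lambda_t^{\mathrm{base}}\in[0,1]$ from the virtual history $(p_s,\lambda_s^{\mathrm{base}},\delta_s^{\mathrm{base}})_{s\le t-1}$, virtual decisions $\delta_t^{\mathrm{base}}=\mathbf{1}\{p_t\le\lambda_t^{\mathrm{base}}\}$, and there is $\eta>0$ with $\liminf_T R_T^{\mathrm{base}}/T\ge\eta$ a.s., where $R_T^{\mathrm{base}}=\sum_{t\le T}\delta_t^{\mathrm{base}}$. DOMT with $\kappa\ge0$, $\alpha\in(0,1)$: $Z_t$ i.i.d. $\mathrm{Uniform}[0,1]$ independent of everything else, $\epsilon_t=\kappa\alpha/\sqrt t$, $\xi_t=\epsilon_tZ_t$, $\lambda_t=\min(1,\lambda_t^{\mathrm{base}}+\xi_t)$, actual decisions $\delta_t=\mathbf{1}\{p_t\le\lambda_t\}$;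 base state updated only with $\delta^{\mathrm{base}}$. For decisions $d_t$: $V_T=\sum_{t\le T}\mathbf{1}\{Y_t=0,d_t=1\}$, $M_T=\sum_{t\le T}\mathbf{1}\{Y_t=1,d_t=0\}$, $\mathrm{Regret}_T(a,b)=aV_T+bM_T$ with $a,b>0$; base uses $d_t=\delta_t^{\mathrm{base}}$, DOMT uses $d_t=\delta_t$. *)

theory Defs
  imports "HOL-Probability.Probability" "HOL-Library.Landau_Symbols"
begin

text \<open>Time is indexed from 1. States Y t :: bool (True means Y_t = 1).
  The base procedure is a deterministic rule F: lambda_t^base = F t (past p-values);
  its virtual history is a deterministic function of p_1,...,p_{t-1}.\<close>

definition lam_base :: "(nat \<Rightarrow> (nat \<Rightarrow> real) \<Rightarrow> real) \<Rightarrow> (nat \<Rightarrow> 'a \<Rightarrow> real) \<Rightarrow> nat \<Rightarrow> 'a \<Rightarrow> real" where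
  "lam_base F p t \<omega> = F t (\<lambda>s. p s \<omega>)"

definition delta_base :: "(nat \<Rightarrow> (nat \<Rightarrow> real) \<Rightarrow> real) \<Rightarrow> (nat \<Rightarrow> 'a \<Rightarrow> real) \<Rightarrow> nat \<Rightarrow> 'a \<Rightarrow> bool" where
  "delta_base F p t \<omega> = (p t \<omega> \<le> lam_base F p t \<omega>)"

definition R_base :: "(nat \<Rightarrow> (nat \<Rightarrow> real) \<Rightarrow> real) \<Rightarrow> (nat \<Rightarrow> 'a \<Rightarrow> real) \<Rightarrow> nat \<Rightarrow> 'a \<Rightarrow> real" where
  "R_base F p T \<omega> = (\<Sum>t\<in>{1..T}. of_bool (delta_base F p t \<omega>))"

definition lam_domt :: "real \<Rightarrow> real \<Rightarrow> (nat \<Rightarrow> (nat \<Rightarrow> real) \<Rightarrow> real) \<Rightarrow> (nat \<Rightarrow> 'a \<Rightarrow> real)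
    \<Rightarrow> (nat \<Rightarrow> 'a \<Rightarrow> real) \<Rightarrow> nat \<Rightarrow> 'a \<Rightarrow> real" where
  "lam_domt \<kappa> \<alpha> F p Z t \<omega> = min 1 (lam_base F p t \<omega> + (\<kappa> * \<alpha> / sqrt (real t)) * Z t \<omega>)"

definition delta_domt :: "real \<Rightarrow> real \<Rightarrow> (nat \<Rightarrow> (nat \<Rightarrow> real) \<Rightarrow> real) \<Rightarrow> (nat \<Rightarrow> 'a \<Rightarrow> real)
    \<Rightarrow> (nat \<Rightarrow> 'a \<Rightarrow> real) \<Rightarrow> nat \<Rightarrow> 'a \<Rightarrow> bool" where
  "delta_domt \<kappa> \<alpha> F p Z t \<omega> = (p t \<omega> \<le> lam_domt \<kappa> \<alpha> F p Z t \<omega>)"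

definition V_count :: "(nat \<Rightarrow> 'a \<Rightarrow> bool) \<Rightarrow> (nat \<Rightarrow> 'a \<Rightarrow> bool) \<Rightarrow> nat \<Rightarrow> 'a \<Rightarrow> real" where
  "V_count Y d T \<omega> = (\<Sum>t\<in>{1..T}. of_bool (\<not> Y t \<omega> \<and> d t \<omega>))"

definition M_count :: "(nat \<Rightarrow> 'a \<Rightarrow> bool) \<Rightarrow> (nat \<Rightarrow> 'a \<Rightarrow> bool) \<Rightarrow> nat \<Rightarrow> 'a \<Rightarrow> real" where
  "M_count Y d T \<omega> = (\<Sum>t\<in>{1..T}. of_bool (Y t \<omega> \<and> \<not> d t \<omega>))"

definition regret :: "real \<Rightarrow> real \<Rightarrow> (nat \<Rightarrow> 'a \<Rightarrow> bool) \<Rightarrow> (nat \<Rightarrow> 'a \<Rightarrow> bool) \<Rightarrow> nat \<Rightarrow> 'a \<Rightarrow> real" where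
  "regret a b Y d T \<omega> = a * V_count Y d T \<omega> + b * M_count Y d T \<omega>"

definition hist_events :: "'a measure \<Rightarrow> (nat \<Rightarrow> 'a \<Rightarrow> bool) \<Rightarrow> (nat \<Rightarrow> 'a \<Rightarrow> real) \<Rightarrow> nat \<Rightarrow> 'a set set" where
  "hist_events M Y p t = sigma_sets (space M)
     ((\<Union>s. {Y s -` B \<inter> space M | B. True}) \<union>
      (\<Union>s\<in>{1..<t}. {p s -` B \<inter> space M | B. B \<in> sets borel}))"

definition Z_events :: "'a measure \<Rightarrow> (nat \<Rightarrow> 'a \<Rightarrow> real) \<Rightarrow> 'a set set" where
  "Z_events M Z = sigma_sets (space M) (\<Union>s. {Z s -` B \<inter> space M | B. B \<in> sets borel})"

definition data_events :: "'a measure \<Rightarrow> (nat \<Rightarrow> 'a \<Rightarrow> bool) \<Rightarrow> (nat \<Rightarrow> 'a \<Rightarrow> real) \<Rightarrow> 'a set set" where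
  "data_events M Y p = sigma_sets (space M)
     ((\<Union>s. {Y s -` B \<inter> space M | B. True}) \<union> (\<Union>s. {p s -` B \<inter> space M | B. B \<in> sets borel}))"

text \<open>Conditionally on the states and the past, p_t ~ Uniform[0,1] if Y_t = 0 and p_t ~ G if Y_t = 1
  (stated via the conditional CDF on every generating event).\<close>
definition cond_law :: "'a measure \<Rightarrow> (real \<Rightarrow> real) \<Rightarrow> (nat \<Rightarrow> 'a \<Rightarrow> bool) \<Rightarrow> (nat \<Rightarrow> 'a \<Rightarrow> real) \<Rightarrow> bool" where
  "cond_law M G Y p \<longleftrightarrow>
     (\<forall>t\<ge>1. \<forall>A\<in>hist_events M Y p t. \<forall>x\<in>{0..1}.
        measure M ({\<omega>\<in>space M. p t \<omega> \<le> x} \<inter> A)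
          = (\<integral>\<omega>. indicator A \<omega> * (if Y t \<omega> then G x else x) \<partial>M))"

end

theory Submission
  imports Defs "HOL-Real_Asymp.Real_Asymp"
begin
lemma lam_base_meas:
  assumes "\<And>t. p t \<in> borel_measurable M" "F t \<in> borel_measurable (PiM UNIV (\<lambda>_. borel))"
  shows "lam_base F p t \<in> borel_measurable M"
proof -
  have "(\<lambda>\<omega> s. p s \<omega>) \<in> measurable M (PiM UNIV (\<lambda>_. borel))"
    by (rule measurable_PiM_single') (use assms in auto)
  from measurable_comp[OF this assms(2)] show ?thesis unfolding lam_base_def by (simp add: o_def)
qed

lemma regret_meas:
  assumes "\<And>t. Y t \<in> measurable M (count_space UNIV)" "\<And>t. d t \<in> measurable M (count_space UNIV)"
  shows "regret a b Y d T \<in> borel_measurable M"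
proof -
  have ob: "(\<lambda>x. (of_bool (P x) :: real)) \<in> borel_measurable M" if "P \<in> measurable M (count_space UNIV)" for P
    by (rule measurable_compose[OF that, of of_bool]) (rule measurable_of_bool)
  show ?thesis unfolding regret_def V_count_def M_count_def
    by (intro borel_measurable_add borel_measurable_times borel_measurable_const borel_measurable_sum
        ob pred_intros_logic assms)
qed
lemma regret_bounds:
  assumes "a > 0" "b > 0"
  shows "0 \<le> regret a b Y d T \<omega> \<and> regret a b Y d T \<omega> \<le> (a+b) * real T"
proof -
  have V: "0 \<le> V_count Y d T \<omega> \<and> V_count Y d T \<omega> \<le> real T"
    unfolding V_count_def using sum_mono[of "{1..T}" "\<lambda>t. of_bool (\<not> Y t \<omega> \<and> d t \<omega>) :: real" "\<lambda>_. 1"]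
    by (auto intro: sum_nonneg)
  have M: "0 \<le> M_count Y d T \<omega> \<and> M_count Y d T \<omega> \<le> real T"
    unfolding M_count_def using sum_mono[of "{1..T}" "\<lambda>t. of_bool (Y t \<omega> \<and> \<not> d t \<omega>) :: real" "\<lambda>_. 1"]
    by (auto intro: sum_nonneg)
  have "a * V_count Y d T \<omega> \<le> a * real T" using V assms by (intro mult_left_mono) auto
  moreover have "b * M_count Y d T \<omega> \<le> b * real T" using M assms by (intro mult_left_mono) auto
  ultimately have "regret a b Y d T \<omega> \<le> a * real T + b * real T" unfolding regret_def by (rule add_mono)
  then show ?thesis using V M assms unfolding regret_def by (simp add: algebra_simps)
qed
lemma sum_inv_sqrt: "(\<Sum>t\<in>{1..T}. 1 / sqrt (real t)) \<le> 2 * sqrt (real T)"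
proof (induction T)
  case 0 then show ?case by simp
next
  case (Suc n)
  have key: "1 / sqrt (real (Suc n)) \<le> 2 * sqrt (real (Suc n)) - 2 * sqrt (real n)"
  proof -
    let ?a = "sqrt (real (Suc n))" and ?b = "sqrt (real n)"
    have a0: "?a > 0" by simp
    have ab: "?b \<le> ?a" by simp
    have "?a * ?a = real n + 1" "?b * ?b = real n" by (simp_all)
    then have "1 = (?a - ?b) * (?a + ?b)" by (simp add: algebra_simps)
    also have "\<dots> \<le> (?a - ?b) * (2 * ?a)" using ab by (intro mult_left_mono) auto
    finally have "1 \<le> (2 * ?a - 2 * ?b) * ?a" by (simp add: algebra_simps)
    then show ?thesis using a0 by (simp add: divide_le_eq)
  qed
  have "(\<Sum>t\<in>{1..Suc n}. 1 / sqrt (real t)) = (\<Sum>t\<in>{1..n}. 1 / sqrt (real t)) + 1 / sqrt (real (Suc n))"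
    by simp
  then show ?case using Suc key by linarith
qed
lemma hist_sub:
  assumes Y_meas: "\<And>t. Y t \<in> measurable M (count_space UNIV)"
    and p_meas: "\<And>t. p t \<in> borel_measurable M"
  shows "hist_events M Y p t \<subseteq> sets M"
  unfolding hist_events_def
proof (rule sets.sigma_sets_subset)
  show "(\<Union>s. {Y s -` B \<inter> space M |B. True}) \<union> (\<Union>s\<in>{1..<t}. {p s -` B \<inter> space M |B. B \<in> sets borel}) \<subseteq> sets M"
    using measurable_sets[OF Y_meas] measurable_sets[OF p_meas] by auto
qed

lemma hist_c:
  assumes p_meas: "\<And>t. p t \<in> borel_measurable M"
    and F_meas: "F t \<in> borel_measurable (PiM UNIV (\<lambda>_. borel))"
    and F_past: "\<And>f g. (\<forall>s\<in>{1..<t}. f s = g s) \<Longrightarrow> F t f = F t g"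
    and B: "B \<in> sets borel"
  shows "{\<omega>\<in>space M. lam_base F p t \<omega> \<in> B} \<in> hist_events M Y p t"
proof -
  define Gs where "Gs = (\<Union>s. {Y s -` B \<inter> space M |B. True}) \<union> (\<Union>s\<in>{1..<t}. {p s -` B \<inter> space M |B. B \<in> sets borel})"
  define H where "H = sigma (space M) Gs"
  have Gs: "Gs \<subseteq> Pow (space M)" unfolding Gs_def by auto
  have sH: "sets H = hist_events M Y p t" unfolding H_def hist_events_def Gs_def[symmetric]
    using Gs by (simp add: sets_measure_of)
  have spH: "space H = space M" unfolding H_def using Gs by (simp add: space_measure_of_conv)
  define q where "q s \<omega> = (if s \<in> {1..<t} then p s \<omega> else 0)" for s \<omega>
  have qm: "q s \<in> borel_measurable H" for s
  proof (cases "s \<in> {1..<t}")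
    case True
    show ?thesis
    proof (rule measurableI)
      fix A :: "real set" assume "A \<in> sets borel"
      then have "p s -` A \<inter> space M \<in> Gs" unfolding Gs_def using True by blast
      moreover have "q s -` A \<inter> space H = p s -` A \<inter> space M" using True by (auto simp: q_def spH)
      ultimately show "q s -` A \<inter> space H \<in> sets H" unfolding H_def using Gs
        by (simp add: sets_measure_of sigma_sets.Basic)
    qed simp
  next
    case False
    then have "q s = (\<lambda>_. 0)" by (auto simp: q_def)
    then show ?thesis by simp
  qed
  have "(\<lambda>\<omega> s. q s \<omega>) \<in> measurable H (PiM UNIV (\<lambda>_. borel))"
    by (rule measurable_PiM_single') (use qm in auto)
  from measurable_comp[OF this F_meas]
  have cm: "(\<lambda>\<omega>. F t (\<lambda>s. q s \<omega>)) \<in> borel_measurable H" by (simp add: o_def)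
  have eq: "F t (\<lambda>s. q s \<omega>) = lam_base F p t \<omega>" for \<omega>
    unfolding lam_base_def by (rule F_past) (auto simp: q_def)
  have "(\<lambda>\<omega>. F t (\<lambda>s. q s \<omega>)) -` B \<inter> space H \<in> sets H" using measurable_sets[OF cm B] .
  moreover have "(\<lambda>\<omega>. F t (\<lambda>s. q s \<omega>)) -` B \<inter> space H = {\<omega>\<in>space M. lam_base F p t \<omega> \<in> B}"
    using eq spH by auto
  ultimately show ?thesis using sH by simp
qed
lemma key:
  assumes P: "prob_space M"
    and Y_meas: "\<And>t. Y t \<in> measurable M (count_space UNIV)"
    and p_meas: "\<And>t. p t \<in> borel_measurable M"
    and law: "cond_law M G Y p"
    and G_lip: "L-lipschitz_on {0..1} G" and L1: "L \<ge> 1"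
    and t: "t \<ge> 1" and eps: "\<epsilon> \<ge> 0"
    and cm: "c \<in> borel_measurable M"
    and ch: "\<And>B. B \<in> sets borel \<Longrightarrow> {\<omega>\<in>space M. c \<omega> \<in> B} \<in> hist_events M Y p t"
    and cr: "\<And>\<omega>. c \<omega> \<in> {0..1}"
  shows "measure M {\<omega>\<in>space M. c \<omega> < p t \<omega> \<and> p t \<omega> \<le> min 1 (c \<omega> + \<epsilon>)} \<le> 2*L*\<epsilon>"
proof -
  interpret prob_space M by (rule P)
  define E where "E = {\<omega>\<in>space M. c \<omega> < p t \<omega> \<and> p t \<omega> \<le> min 1 (c \<omega> + \<epsilon>)}"
  have pm: "p t \<in> borel_measurable M" by (rule p_meas)
  have Em: "E \<in> sets M" unfolding E_def using cm pm by measurable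
  show ?thesis
  proof (cases "\<epsilon> = 0")
    case True
    then have "E = {}" unfolding E_def using cr by force
    then show ?thesis using True unfolding E_def[symmetric] by simp
  next
    case False
    then have epos: "\<epsilon> > 0" using eps by simp
    obtain N :: nat where N: "1 / \<epsilon> < real N" using reals_Archimedean2 by blast
    have Npos: "real N > 0" using N epos by (smt (verit) divide_pos_pos)
    define h where "h = 1 / real N"
    have hpos: "h > 0" using Npos by (simp add: h_def)
    have hle: "h \<le> \<epsilon>" unfolding h_def using N epos Npos by (simp add: field_simps)
    define A where "A k = {\<omega>\<in>space M. c \<omega> \<in> {real k * h ..< (real k + 1) * h}}" for k :: nat
    have Ah: "A k \<in> hist_events M Y p t" for k unfolding A_def by (rule ch) simp
    have hs: "hist_events M Y p t \<subseteq> sets M" by (rule hist_sub[OF Y_meas p_meas])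
    have Am: "A k \<in> sets M" for k using Ah hs by blast
    have Hmeas: "(\<lambda>\<omega>. indicator (A k) \<omega> * (if Y t \<omega> then G x else x)) \<in> borel_measurable M" for k x
    proof -
      have "(\<lambda>\<omega>. (if Y t \<omega> then G x else x)) \<in> borel_measurable M"
        using Y_meas[of t] by (intro measurable_If) (auto simp: pred_def[symmetric])
      then show ?thesis using Am[of k] by (intro borel_measurable_times borel_measurable_indicator)
    qed
    have Hint: "integrable M (\<lambda>\<omega>. indicator (A k) \<omega> * (if Y t \<omega> then G x else x))" for k x
      by (rule integrable_const_bound[where B="\<bar>G x\<bar> + \<bar>x\<bar>", OF _ Hmeas]) (auto simp: indicator_def Hmeas)
    have bound_k: "measure M (E \<inter> A k) \<le> 2*L*\<epsilon> * measure M (A k)" for k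
    proof -
      define lo where "lo = min 1 (real k * h)"
      define hi where "hi = min 1 ((real k + 1) * h + \<epsilon>)"
      have lo01: "lo \<in> {0..1}" unfolding lo_def using hpos by auto
      have hi01: "hi \<in> {0..1}" unfolding hi_def using hpos epos by auto
      have lohi: "lo \<le> hi" unfolding lo_def hi_def using hpos epos by (auto simp: algebra_simps)
      have diff: "hi - lo \<le> 2 * \<epsilon>"
        unfolding lo_def hi_def using hle epos by (auto simp: algebra_simps min_def)
      define S where "S x = {\<omega>\<in>space M. p t \<omega> \<le> x} \<inter> A k" for x
      have Sm: "S x \<in> sets M" for x unfolding S_def using pm Am[of k] by measurable
      have SI: "measure M (S x) = (\<integral>\<omega>. indicator (A k) \<omega> * (if Y t \<omega> then G x else x) \<partial>M)"
        if "x \<in> {0..1}" for x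
        using law t Ah[of k] that unfolding cond_law_def S_def by blast
      have sub: "E \<inter> A k \<subseteq> S hi - S lo"
      proof
        fix \<omega> assume w: "\<omega> \<in> E \<inter> A k"
        then have c1: "real k * h \<le> c \<omega>" "c \<omega> < (real k + 1) * h" unfolding A_def by auto
        from w have e1: "c \<omega> < p t \<omega>" "p t \<omega> \<le> min 1 (c \<omega> + \<epsilon>)" and ws: "\<omega> \<in> space M"
          unfolding E_def by auto
        have "p t \<omega> \<le> hi" unfolding hi_def using c1 e1 by auto
        moreover have "\<not> p t \<omega> \<le> lo" unfolding lo_def using c1 e1 by auto
        ultimately show "\<omega> \<in> S hi - S lo" using w ws unfolding S_def by auto
      qed
      have "measure M (E \<inter> A k) \<le> measure M (S hi - S lo)"
        using sub Sm by (intro finite_measure_mono) auto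
      also have "\<dots> = measure M (S hi) - measure M (S lo)"
        using Sm lohi by (intro finite_measure_Diff) (auto simp: S_def)
      also have "\<dots> = (\<integral>\<omega>. indicator (A k) \<omega> * (if Y t \<omega> then G hi else hi)
                        - indicator (A k) \<omega> * (if Y t \<omega> then G lo else lo) \<partial>M)"
        using SI[OF hi01] SI[OF lo01] by (simp add: Hint)
      also have "\<dots> \<le> (\<integral>\<omega>. indicator (A k) \<omega> * (2*L*\<epsilon>) \<partial>M)"
      proof (rule integral_mono)
        show "integrable M (\<lambda>\<omega>. indicator (A k) \<omega> * (2*L*\<epsilon>))" using Am[of k] by (simp add: integrable_indicator_iff less_top[symmetric])
        show "integrable M (\<lambda>\<omega>. indicator (A k) \<omega> * (if Y t \<omega> then G hi else hi)
                        - indicator (A k) \<omega> * (if Y t \<omega> then G lo else lo))"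
          by (intro Bochner_Integration.integrable_diff Hint)
        fix \<omega>
        have Gd: "G hi - G lo \<le> L * (hi - lo)"
          using lipschitz_onD[OF G_lip hi01 lo01] lohi by (simp add: dist_real_def)
        have id: "hi - lo \<le> L * (hi - lo)" using L1 lohi mult_right_mono[of 1 L "hi - lo"] by simp
        have "L * (hi - lo) \<le> L * (2*\<epsilon>)" using diff L1 by (intro mult_left_mono) auto
        then show "indicator (A k) \<omega> * (if Y t \<omega> then G hi else hi)
                        - indicator (A k) \<omega> * (if Y t \<omega> then G lo else lo) \<le> indicator (A k) \<omega> * (2*L*\<epsilon>)"
          using Gd id by (auto simp: indicator_def)
      qed
      also have "\<dots> = 2*L*\<epsilon> * measure M (A k)" using Am[of k] by simp
      finally show ?thesis .
    qed
    have cover: "E \<subseteq> (\<Union>k\<in>{0..N}. E \<inter> A k)"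
    proof
      fix \<omega> assume w: "\<omega> \<in> E"
      then have ws: "\<omega> \<in> space M" unfolding E_def by auto
      define k where "k = nat \<lfloor>c \<omega> * real N\<rfloor>"
      have c0: "0 \<le> c \<omega>" "c \<omega> \<le> 1" using cr[of \<omega>] by auto
      have fl0: "0 \<le> \<lfloor>c \<omega> * real N\<rfloor>" using c0 Npos by simp
      have kr: "real k = of_int \<lfloor>c \<omega> * real N\<rfloor>" unfolding k_def using fl0 by simp
      have k1: "real k \<le> c \<omega> * real N" "c \<omega> * real N < real k + 1" unfolding kr
        by (simp, linarith)+
      have "real k \<le> real N" using k1 c0 Npos by (smt (verit) mult_left_le_one_le)
      then have kN: "k \<in> {0..N}" by simp
      have "real k * h \<le> c \<omega>" "c \<omega> < (real k + 1) * h"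
        using k1 Npos by (simp_all add: h_def field_simps)
      then have "\<omega> \<in> A k" unfolding A_def using ws by auto
      then show "\<omega> \<in> (\<Union>k\<in>{0..N}. E \<inter> A k)" using w kN by blast
    qed
    have disj: "disjoint_family_on A {0..N}"
    unfolding disjoint_family_on_def
    proof (intro ballI impI)
      fix i j assume ij: "i \<in> {0..N}" "j \<in> {0..N}" "i \<noteq> j"
      show "A i \<inter> A j = {}"
      proof (rule ccontr)
        assume "A i \<inter> A j \<noteq> {}"
        then obtain \<omega> where "\<omega> \<in> A i" "\<omega> \<in> A j" by blast
        then have "real i * h < (real j + 1) * h" "real j * h < (real i + 1) * h"
          unfolding A_def by auto
        then have "real i < real j + 1" "real j < real i + 1" using hpos by (simp_all add: mult_less_cancel_right)
        then show False using ij(3) by linarith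
      qed
    qed
    have "measure M E \<le> measure M (\<Union>k\<in>{0..N}. E \<inter> A k)"
      using cover Em Am by (intro finite_measure_mono) auto
    also have "\<dots> \<le> (\<Sum>k\<in>{0..N}. measure M (E \<inter> A k))"
      using Em Am by (intro finite_measure_subadditive_finite) auto
    also have "\<dots> \<le> (\<Sum>k\<in>{0..N}. 2*L*\<epsilon> * measure M (A k))"
      by (intro sum_mono bound_k)
    also have "\<dots> = 2*L*\<epsilon> * measure M (\<Union>k\<in>{0..N}. A k)"
      using Am disj by (simp add: sum_distrib_left finite_measure_finite_Union image_subset_iff)
    also have "\<dots> \<le> 2*L*\<epsilon> * 1"
      using L1 epos by (intro mult_left_mono) auto
    finally show ?thesis unfolding E_def by simp
  qed
qed
lemma pointwise:
  fixes c e z q :: real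
  assumes "0 \<le> z" "z \<le> 1" "0 \<le> e" "c \<in> {0..1}" "(q \<le> min 1 (c + e*z)) \<noteq> (q \<le> c)"
  shows "c < q \<and> q \<le> min 1 (c + e)"
proof -
  have "e * z \<le> e" using assms by (simp add: mult_left_le)
  moreover have "0 \<le> e * z" using assms by simp
  ultimately show ?thesis using assms(4,5) unfolding min_def
    by (cases "1 \<le> c + e*z"; cases "1 \<le> c + e"; simp; linarith)
qed

lemma term_bound:
  fixes a b :: real
  assumes "a > 0" "b > 0" "dd = db \<or> X"
  shows "\<bar>a * (of_bool (\<not> y \<and> dd) - of_bool (\<not> y \<and> db)) + b * (of_bool (y \<and> \<not> dd) - of_bool (y \<and> \<not> db))\<bar>
    \<le> (a + b) * of_bool X"
  using assms by (cases y; cases dd; cases db; cases X) auto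

lemma Z_ae:
  assumes P: "prob_space M" and Zm: "Z t \<in> borel_measurable M"
    and Zu: "distr M lborel (Z t) = uniform_measure lborel {0..1}"
  shows "AE \<omega> in M. Z t \<omega> \<in> {0..1::real}"
proof -
  interpret prob_space M by (rule P)
  have Zm': "Z t \<in> measurable M lborel" using Zm by simp
  have "emeasure M (Z t -` {0..1} \<inter> space M) = emeasure (distr M lborel (Z t)) {0..1}"
    by (rule emeasure_distr[OF Zm', symmetric]) simp
  also have "\<dots> = 1" unfolding Zu by (simp add: emeasure_uniform_measure)
  finally have "prob (Z t -` {0..1} \<inter> space M) = 1" by (simp add: measure_def)
  then have "AE \<omega> in M. \<omega> \<in> Z t -` {0..1} \<inter> space M"
    using measurable_sets[OF Zm', of "{0..1}"] by (intro AE_prob_1) auto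
  then show ?thesis by eventually_elim auto
qed
theorem corollary2:
  fixes M :: "'a measure"
    and Y :: "nat \<Rightarrow> 'a \<Rightarrow> bool"
    and p Z :: "nat \<Rightarrow> 'a \<Rightarrow> real"
    and G :: "real \<Rightarrow> real"
    and L \<kappa> \<alpha> a b :: real
    and F :: "nat \<Rightarrow> (nat \<Rightarrow> real) \<Rightarrow> real"
  assumes P: "prob_space M"
    and Y_meas: "\<And>t. Y t \<in> measurable M (count_space UNIV)"
    and p_meas: "\<And>t. p t \<in> borel_measurable M"
    and G_cont: "continuous_on {0..1} G"
    and G_mono: "strict_mono_on {0..1} G"
    and G0: "G 0 = 0" and G1: "G 1 = 1"
    and G_lip: "L-lipschitz_on {0..1} G" and L1: "L \<ge> 1"
    and law: "cond_law M G Y p"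
    and F_meas: "\<And>t. F t \<in> borel_measurable (PiM UNIV (\<lambda>_. borel))"
    and F_range: "\<And>t f. F t f \<in> {0..1}"
    and F_past: "\<And>t f g. (\<forall>s\<in>{1..<t}. f s = g s) \<Longrightarrow> F t f = F t g"
    and base_rate: "\<exists>\<eta>>0. AE \<omega> in M.
        liminf (\<lambda>T. ereal (R_base F p T \<omega> / real T)) \<ge> ereal \<eta>"
    and Z_unif: "\<And>t. distr M lborel (Z t) = uniform_measure lborel {0..1}"
    and Z_iid: "prob_space.indep_vars M (\<lambda>_. borel) Z UNIV"
    and Z_indep: "prob_space.indep_set M (Z_events M Z) (data_events M Y p)"
    and \<kappa>: "\<kappa> \<ge> 0" and \<alpha>: "0 < \<alpha>" "\<alpha> < 1"
    and ab: "a > 0" "b > 0"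
    and base_lin: "(\<lambda>T. \<integral>\<omega>. regret a b Y (delta_base F p) T \<omega> \<partial>M) \<in> \<Omega>(\<lambda>T. real T)"
  shows "(\<lambda>T. (\<integral>\<omega>. regret a b Y (delta_domt \<kappa> \<alpha> F p Z) T \<omega> \<partial>M)
              - (\<integral>\<omega>. regret a b Y (delta_base F p) T \<omega> \<partial>M)) \<in> O(\<lambda>T. sqrt (real T)) \<and>
         (\<lambda>T. \<integral>\<omega>. regret a b Y (delta_domt \<kappa> \<alpha> F p Z) T \<omega> \<partial>M) \<in> \<Theta>(\<lambda>T. real T)"
proof -
  interpret prob_space M by (rule P)
  define c where "c t = lam_base F p t" for t
  define dd where "dd = delta_domt \<kappa> \<alpha> F p Z"
  define db where "db = delta_base F p"
  define e where "e t = \<kappa> * \<alpha> / sqrt (real t)" for t :: nat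
  define E where "E t = {\<omega>\<in>space M. c t \<omega> < p t \<omega> \<and> p t \<omega> \<le> min 1 (c t \<omega> + e t)}" for t
  have e0: "e t \<ge> 0" for t unfolding e_def using \<kappa> \<alpha> by simp
  have cm: "c t \<in> borel_measurable M" for t unfolding c_def by (rule lam_base_meas[OF p_meas F_meas])
  have Zm: "Z t \<in> borel_measurable M" for t
    using Z_iid unfolding indep_vars_def by auto
  have pm: "p t \<in> borel_measurable M" for t by (rule p_meas)
  have Em: "E t \<in> sets M" for t unfolding E_def using cm[of t] pm[of t] by measurable
  have PE: "measure M (E t) \<le> 2 * L * e t" if "t \<ge> 1" for t
    unfolding E_def
  proof (rule key[OF P Y_meas p_meas law G_lip L1 that e0 cm])
    show "{\<omega> \<in> space M. c t \<omega> \<in> B} \<in> hist_events M Y p t" if "B \<in> sets borel" for B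
      unfolding c_def by (rule hist_c[OF p_meas F_meas F_past that])
    show "c t \<omega> \<in> {0..1}" for \<omega> unfolding c_def lam_base_def by (rule F_range)
  qed
  have ddm: "dd t \<in> measurable M (count_space UNIV)" for t
  proof -
    have "lam_domt \<kappa> \<alpha> F p Z t \<in> borel_measurable M"
      unfolding lam_domt_def using cm[of t] Zm[of t] unfolding c_def by measurable
    then show ?thesis unfolding dd_def delta_domt_def using pm[of t] by measurable
  qed
  have dbm: "db t \<in> measurable M (count_space UNIV)" for t
    unfolding db_def delta_base_def using pm[of t] cm[of t] unfolding c_def by measurable
  have rdm: "regret a b Y dd T \<in> borel_measurable M" for T by (rule regret_meas[OF Y_meas ddm])
  have rbm: "regret a b Y db T \<in> borel_measurable M" for T by (rule regret_meas[OF Y_meas dbm])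
  have rdi: "integrable M (regret a b Y dd T)" for T
    by (rule integrable_const_bound[where B="(a+b) * real T", OF _ rdm]) (intro AE_I2, metis regret_bounds[OF ab] abs_of_nonneg real_norm_def)
  have rbi: "integrable M (regret a b Y db T)" for T
    by (rule integrable_const_bound[where B="(a+b) * real T", OF _ rbm]) (intro AE_I2, metis regret_bounds[OF ab] abs_of_nonneg real_norm_def)
  have AEZ: "AE \<omega> in M. \<forall>t. Z t \<omega> \<in> {0..1::real}"
    by (subst AE_all_countable) (intro allI Z_ae[OF P Zm Z_unif])
  have AEb: "AE \<omega> in M. \<bar>regret a b Y dd T \<omega> - regret a b Y db T \<omega>\<bar>
              \<le> (a + b) * (\<Sum>t\<in>{1..T}. indicator (E t) \<omega>)" for T
    using AEZ AE_space
  proof eventually_elim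
    case (elim \<omega>)
    define tm where "tm t = a * (of_bool (\<not> Y t \<omega> \<and> dd t \<omega>) - of_bool (\<not> Y t \<omega> \<and> db t \<omega>))
       + b * (of_bool (Y t \<omega> \<and> \<not> dd t \<omega>) - of_bool (Y t \<omega> \<and> \<not> db t \<omega>))" for t
    have deq: "regret a b Y dd T \<omega> - regret a b Y db T \<omega> = (\<Sum>t\<in>{1..T}. tm t)"
      unfolding tm_def regret_def V_count_def M_count_def
      by (simp add: sum_subtractf sum.distrib sum_distrib_left algebra_simps)
    have tb: "\<bar>tm t\<bar> \<le> (a + b) * indicator (E t) \<omega>" for t
    proof -
      have "dd t \<omega> = db t \<omega> \<or> \<omega> \<in> E t"
      proof (cases "dd t \<omega> = db t \<omega>")
        case True then show ?thesis by simp
      next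
        case False note ne = this
        have cr: "c t \<omega> \<in> {0..1}" unfolding c_def lam_base_def by (rule F_range)
        have "c t \<omega> < p t \<omega> \<and> p t \<omega> \<le> min 1 (c t \<omega> + e t)"
          by (rule pointwise[where z="Z t \<omega>"]) (use elim ne e0[of t] cr in
             \<open>auto simp: dd_def db_def delta_domt_def delta_base_def lam_domt_def c_def e_def\<close>)
        then show ?thesis unfolding E_def using elim by auto
      qed
      from term_bound[OF ab this, of "Y t \<omega>"] show ?thesis
        unfolding tm_def by (simp add: indicator_def of_bool_def)
    qed
    have "\<bar>\<Sum>t\<in>{1..T}. tm t\<bar> \<le> (\<Sum>t\<in>{1..T}. \<bar>tm t\<bar>)" by (rule sum_abs)
    also have "\<dots> \<le> (\<Sum>t\<in>{1..T}. (a + b) * indicator (E t) \<omega>)" by (intro sum_mono tb)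
    finally show ?case unfolding deq by (simp add: sum_distrib_left)
  qed
  define K where "K = 4 * (a + b) * L * \<kappa> * \<alpha>"
  have diffb: "\<bar>(\<integral>\<omega>. regret a b Y dd T \<omega> \<partial>M) - (\<integral>\<omega>. regret a b Y db T \<omega> \<partial>M)\<bar> \<le> K * sqrt (real T)" for T
  proof -
    let ?d = "\<lambda>\<omega>. regret a b Y dd T \<omega> - regret a b Y db T \<omega>"
    let ?g = "\<lambda>\<omega>. (a + b) * (\<Sum>t\<in>{1..T}. indicator (E t) \<omega> :: real)"
    have ii: "integrable M (indicator (E t) :: _ \<Rightarrow> real)" for t
      using Em[of t] by (simp add: integrable_indicator_iff less_top[symmetric])
    have gi: "integrable M ?g" using ii by auto
    have "\<bar>(\<integral>\<omega>. regret a b Y dd T \<omega> \<partial>M) - (\<integral>\<omega>. regret a b Y db T \<omega> \<partial>M)\<bar> = \<bar>\<integral>\<omega>. ?d \<omega> \<partial>M\<bar>"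
      using rdi rbi by simp
    also have "\<dots> \<le> (\<integral>\<omega>. \<bar>?d \<omega>\<bar> \<partial>M)" using integral_norm_bound[of M ?d] by simp
    also have "\<dots> \<le> (\<integral>\<omega>. ?g \<omega> \<partial>M)"
      by (rule integral_mono_AE[OF _ gi AEb]) (use rdi rbi in auto)
    also have "\<dots> = (a + b) * (\<Sum>t\<in>{1..T}. measure M (E t))"
      using ii Em by (simp add: integral_sum)
    also have "\<dots> \<le> (a + b) * (\<Sum>t\<in>{1..T}. 2 * L * e t)"
      using ab PE by (intro mult_left_mono sum_mono) auto
    also have "\<dots> = (a + b) * (2 * L * \<kappa> * \<alpha>) * (\<Sum>t\<in>{1..T}. 1 / sqrt (real t))"
      by (simp add: e_def sum_distrib_left mult.assoc)
    also have "\<dots> \<le> (a + b) * (2 * L * \<kappa> * \<alpha>) * (2 * sqrt (real T))"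
      using ab L1 \<kappa> \<alpha> by (intro mult_left_mono sum_inv_sqrt) auto
    also have "\<dots> = K * sqrt (real T)" by (simp add: K_def algebra_simps)
    finally show ?thesis .
  qed
  define Rd where "Rd T = (\<integral>\<omega>. regret a b Y dd T \<omega> \<partial>M)" for T
  define Rb where "Rb T = (\<integral>\<omega>. regret a b Y db T \<omega> \<partial>M)" for T
  have K0: "K \<ge> 0" unfolding K_def using ab L1 \<kappa> \<alpha> by simp
  have part1: "(\<lambda>T. Rd T - Rb T) \<in> O(\<lambda>T. sqrt (real T))"
  proof (rule landau_o.bigI[of "K + 1"])
    show "K + 1 > 0" using K0 by simp
    show "\<forall>\<^sub>F x in at_top. norm (Rd x - Rb x) \<le> (K + 1) * norm (sqrt (real x))"
    proof (intro always_eventually allI)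
      fix x :: nat
      have "norm (Rd x - Rb x) \<le> K * sqrt (real x)" using diffb[of x] by (simp add: Rd_def Rb_def)
      also have "\<dots> \<le> (K + 1) * norm (sqrt (real x))" by (simp add: mult_right_mono)
      finally show "norm (Rd x - Rb x) \<le> (K + 1) * norm (sqrt (real x))" .
    qed
  qed
  have Rd_bd: "0 \<le> Rd T \<and> Rd T \<le> (a + b) * real T" for T
  proof
    show "0 \<le> Rd T" unfolding Rd_def by (intro integral_nonneg_AE AE_I2) (metis regret_bounds[OF ab])
    have "Rd T \<le> (\<integral>\<omega>. (a + b) * real T \<partial>M)" unfolding Rd_def
      by (rule integral_mono[OF rdi]) (auto intro: regret_bounds[OF ab, THEN conjunct2])
    then show "Rd T \<le> (a + b) * real T" by (simp add: prob_space)
  qed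
  have bigO: "Rd \<in> O(\<lambda>T. real T)"
  proof (rule landau_o.bigI[of "a + b"])
    show "a + b > 0" using ab by simp
    show "\<forall>\<^sub>F x in at_top. norm (Rd x) \<le> (a + b) * norm (real x)"
      using Rd_bd by (intro always_eventually allI) auto
  qed
  have so: "(\<lambda>T. sqrt (real T)) \<in> o(\<lambda>T. real T)" by real_asymp
  have dso: "(\<lambda>T. Rd T - Rb T) \<in> o(\<lambda>T. real T)" by (rule landau_o.big_small_trans[OF part1 so])
  have bO: "Rb \<in> \<Omega>(\<lambda>T. real T)" using base_lin unfolding Rb_def db_def by simp
  obtain cc where cc: "cc > 0" "\<forall>\<^sub>F x in at_top. norm (Rb x) \<ge> cc * norm (real x)"
    using landau_omega.bigE[OF bO] by blast
  have ev2: "\<forall>\<^sub>F x in at_top. norm (Rd x - Rb x) \<le> (cc/2) * norm (real x)"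
    using landau_o.smallD[OF dso, of "cc/2"] cc(1) by simp
  have bigOm: "Rd \<in> \<Omega>(\<lambda>T. real T)"
  proof (rule landau_omega.bigI[of "cc/2"])
    show "cc/2 > 0" using cc by simp
    show "\<forall>\<^sub>F x in at_top. norm (Rd x) \<ge> cc/2 * norm (real x)"
      using cc(2) ev2
    proof eventually_elim
      case (elim x)
      have "norm (Rb x) \<le> norm (Rd x) + norm (Rd x - Rb x)" by (simp add: abs_le_iff) linarith
      then show ?case using elim by simp
    qed
  qed
  have "(\<lambda>T. Rd T - Rb T) \<in> O(\<lambda>T. sqrt (real T)) \<and> Rd \<in> \<Theta>(\<lambda>T. real T)"
    using part1 bigO bigOm by auto
  then show ?thesis unfolding Rd_def Rb_def dd_def db_def .
qed

end
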